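(* Let $x>0$, $N\in\mathbb{N}$, $q\in\mathbb{N}$, let $\chi$ be any Dirichlet character modulo $q$, and let $h\in\mathbb{Z}$. Then for every real $c_0>\max\{1,(N-2h+1)/N\}$, $$\sum_{r=1}^{q}\sum_{n=1}^{\infty}\frac{\chi(r)\,n^{N-2h}\exp\left(-\frac{r}{q}n^Nx\right)}{1-\exp(-n^Nx)}=\frac{1}{2\pi i}\int_{c_0-i\infty}^{c_0+i\infty}\Gamma(s)L(s,\chi)\zeta(Ns-(N-2h))\left(\frac{q}{x}\right)^{s}\,\mathrm{d}s.$$
   Context: $\Gamma$ is the Gamma function, $\zeta$ the Riemann zeta function and $L(s,\chi)=\sum_{n\ge1}\chi(n)n^{-s}$ the Dirichlet $L$-function; the integral is over the vertical line $\Re(s)=c_0$. *)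

theory Defs
  imports "HOL-Analysis.Analysis" "HOL-Number_Theory.Number_Theory"
begin

definition dirichlet_character :: "nat \<Rightarrow> (nat \<Rightarrow> complex) \<Rightarrow> bool" where
  "dirichlet_character q chi \<longleftrightarrow> q \<ge> 1 \<and> chi 1 = 1 \<and>
     (\<forall>m n. chi (m * n) = chi m * chi n) \<and>
     (\<forall>n. chi (n + q) = chi n) \<and>
     (\<forall>n. chi n \<noteq> 0 \<longleftrightarrow> coprime n q)"

text \<open>Dirichlet series definitions, valid (and used only) in the half-plane Re s > 1.\<close>
definition dirichlet_L :: "complex \<Rightarrow> (nat \<Rightarrow> complex) \<Rightarrow> complex" where
  "dirichlet_L s chi = (\<Sum>n. chi (Suc n) / (of_nat (Suc n)) powr s)"

definition riemann_zeta :: "complex \<Rightarrow> complex" where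
  "riemann_zeta s = (\<Sum>n. 1 / (of_nat (Suc n)) powr s)"

end

theory Submission imports Defs "HOL-Probability.Levy" begin

lemma norm_Gamma_series_bound:
  fixes c t :: real and n :: nat
  assumes c: "c \<ge> 1" and n: "n \<ge> 1"
  shows "norm (Gamma_series (Complex c t) n) \<le> Gamma_series c n * (c*(c+1)) / (1 + t^2)"
proof -
  define z where "z = Complex c t"
  obtain m where m: "n = Suc m" using n by (cases n) auto
  have pz: "pochhammer z (n+1) = z * ((z+1) * pochhammer (z+1+1) m)"
    unfolding m by (simp add: pochhammer_rec)
  have pc: "pochhammer c (n+1) = c * ((c+1) * pochhammer (c+1+1) m)"
    unfolding m by (simp add: pochhammer_rec)
  have Ppos: "pochhammer (c+1+1) m > 0" using c by (intro pochhammer_pos) auto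
  have P: "norm (pochhammer (z+1+1) m) \<ge> pochhammer (c+1+1) m"
  proof -
    have "pochhammer (c+1+1) m = (\<Prod>i<m. c+1+1 + of_nat i)"
      by (simp add: pochhammer_prod atLeast0LessThan)
    also have "\<dots> \<le> (\<Prod>i<m. norm (z+1+1 + of_nat i))"
    proof (intro prod_mono conjI)
      fix i assume "i \<in> {..<m}"
      show "0 \<le> c+1+1 + real i" using c by simp
      have "c+1+1+ real i = Re (z+1+1+ of_nat i)" by (simp add: z_def)
      also have "\<dots> \<le> norm (z+1+1+ of_nat i)" by (rule complex_Re_le_cmod)
      finally show "c+1+1+ real i \<le> norm (z+1+1+ of_nat i)" .
    qed
    also have "\<dots> = norm (pochhammer (z+1+1) m)"
      by (simp add: pochhammer_prod atLeast0LessThan prod_norm)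
    finally show ?thesis .
  qed
  have nz: "norm z \<ge> sqrt (1 + t^2)" using c
    by (auto simp: z_def cmod_def intro!: real_sqrt_le_mono power_mono)
  have nz1: "norm (z+1) \<ge> sqrt (1 + t^2)" using c
    by (auto simp: z_def cmod_def intro!: real_sqrt_le_mono power_mono)
  have "norm z * norm (z+1) \<ge> sqrt (1+t^2) * sqrt (1+t^2)"
    using nz nz1 by (intro mult_mono) auto
  hence Z: "norm z * norm (z+1) \<ge> 1 + t^2" by simp
  have np: "norm (pochhammer z (n+1)) \<ge> (1+t^2) * pochhammer (c+1+1) m"
  proof -
    have "(1+t^2) * pochhammer (c+1+1) m \<le> (norm z * norm (z+1)) * norm (pochhammer (z+1+1) m)"
      using Z P Ppos by (intro mult_mono) auto
    also have "\<dots> = norm (pochhammer z (n+1))" unfolding pz norm_mult by (simp only: mult.assoc)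
    finally show ?thesis .
  qed
  have tp: "(1+t^2) * pochhammer (c+1+1) m > 0" using Ppos by (intro mult_pos_pos add_pos_nonneg) auto
  have ex: "norm (exp (z * of_real (ln (of_nat n)))) = exp (c * ln (of_nat n))"
    by (simp add: z_def)
  have "norm (Gamma_series z n) = fact n * exp (c * ln (of_nat n)) / norm (pochhammer z (n+1))"
    by (simp add: Gamma_series_def norm_divide norm_mult ex z_def)
  also have "\<dots> \<le> fact n * exp (c * ln (of_nat n)) / ((1+t^2) * pochhammer (c+1+1) m)"
    using np Ppos tp by (intro divide_left_mono) (auto intro!: mult_pos_pos add_pos_nonneg simp del: pochhammer_Suc)
  also have "\<dots> = Gamma_series c n * (c*(c+1)) / (1 + t^2)"
  proof -
    have gen: "A / (d * P) = A / (c * ((c+1) * P)) * (c*(c+1)) / d" if "P > 0" "d > 0" for A d P :: real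
    proof -
      have k: "A / (d*P) = A/(k*P)*k/d" if "k > 0" for k using that \<open>P>0\<close> \<open>d>0\<close> by (simp add: field_simps)
      have "c * (c+1) > 0" using c by simp
      from k[OF this] show ?thesis by (simp add: mult.assoc)
    qed
    show ?thesis unfolding Gamma_series_def pc
      using gen[of "pochhammer (c+1+1) m" "1+t^2"] Ppos by (simp add: add_pos_nonneg)
  qed
  finally show ?thesis by (simp add: z_def)
qed

lemma norm_Gamma_bound:
  fixes c t :: real
  assumes c: "c \<ge> 1"
  shows "norm (Gamma (Complex c t)) \<le> Gamma c * (c*(c+1)) / (1 + t^2)"
proof -
  have "(\<lambda>n. norm (Gamma_series (Complex c t) n)) \<longlonglongrightarrow> norm (Gamma (Complex c t))"
    by (intro tendsto_intros)
  moreover have "(\<lambda>n. Gamma_series c n * (c*(c+1)) / (1 + t^2)) \<longlonglongrightarrow> Gamma c * (c*(c+1)) / (1 + t^2)"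
    by (intro tendsto_intros) (smt (verit) zero_le_power2)
  moreover have "eventually (\<lambda>n. norm (Gamma_series (Complex c t) n) \<le> Gamma_series c n * (c*(c+1)) / (1 + t^2)) sequentially"
    using eventually_ge_at_top[of 1] by eventually_elim (rule norm_Gamma_series_bound[OF c])
  ultimately show ?thesis using tendsto_le[OF sequentially_bot] by blast
qed


definition gd_f :: "real \<Rightarrow> real \<Rightarrow> real" where
  "gd_f c u = u powr (c - 1) / exp u / Gamma c"
definition gd_p :: "real \<Rightarrow> real \<Rightarrow> real" where
  "gd_p c u = gd_f c u * indicator {0..} u"
definition gd_G :: "real \<Rightarrow> real measure" where
  "gd_G c = density lborel (\<lambda>u. ennreal (gd_p c u))"
definition gd_M :: "real \<Rightarrow> real measure" where
  "gd_M c = distr (gd_G c) borel ln"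

lemma gd_f_nonneg: "c > 0 \<Longrightarrow> gd_f c u \<ge> 0"
  by (simp add: gd_f_def)

lemma gd_p_nonneg: "c > 0 \<Longrightarrow> gd_p c u \<ge> 0"
  by (simp add: gd_p_def gd_f_nonneg)

lemma gd_p_meas[measurable]: "gd_p c \<in> borel_measurable borel"
  unfolding gd_p_def gd_f_def by measurable

lemma gd_f_has_integral: "c > 0 \<Longrightarrow> (gd_f c has_integral 1) {0..}"
proof -
  assume c: "c > 0"
  have "((\<lambda>u. u powr (c - 1) / exp u) has_integral Gamma c) {0..}"
    using Gamma_integral_real[OF c] by simp
  hence "((\<lambda>u. u powr (c - 1) / exp u / Gamma c) has_integral Gamma c / Gamma c) {0..}"
    by (rule has_integral_divide)
  thus ?thesis using Gamma_real_pos[OF c] unfolding gd_f_def[abs_def] by simp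
qed

lemma gd_nn: "c > 0 \<Longrightarrow> (\<integral>\<^sup>+u. ennreal (gd_p c u) \<partial>lborel) = 1"
proof -
  assume c: "c > 0"
  have "(\<integral>\<^sup>+u. ennreal (gd_f c u) * indicator {0..} u \<partial>lborel) = ennreal 1"
    by (rule nn_integral_has_integral_lebesgue'[OF _ gd_f_has_integral[OF c]]) (simp add: gd_f_nonneg c)
  moreover have "ennreal (gd_p c u) = ennreal (gd_f c u) * indicator {0..} u" for u
    by (simp add: gd_p_def split: split_indicator)
  ultimately show ?thesis by simp
qed

lemma gd_G_prob: "c > 0 \<Longrightarrow> prob_space (gd_G c)"
  by (rule prob_spaceI) (simp add: gd_G_def emeasure_density gd_nn)

lemma gd_M_real_distribution: "c > 0 \<Longrightarrow> real_distribution (gd_M c)"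
proof -
  assume c: "c > 0"
  interpret G: prob_space "gd_G c" by (rule gd_G_prob[OF c])
  interpret prob_space "gd_M c" unfolding gd_M_def
    by (rule G.prob_space_distr) (simp add: gd_G_def)
  show ?thesis by unfold_locales (simp add: gd_M_def)
qed


lemma gd_pointwise:
  fixes u c t :: real assumes u: "u > 0"
  shows "gd_f c u *\<^sub>R iexp (t * ln u) =
     complex_of_real u powr (Complex c t - 1) / complex_of_real (exp u) / complex_of_real (Gamma c)"
proof -
  have e: "Complex c t - 1 = complex_of_real (c - 1) + \<i> * complex_of_real t"
    by (simp add: complex_eq_iff)
  have "complex_of_real u powr (Complex c t - 1) = exp ((Complex c t - 1) * complex_of_real (ln u))"
    using u by (simp add: powr_def Ln_of_real)
  also have "(Complex c t - 1) * complex_of_real (ln u) = complex_of_real ((c-1) * ln u) + \<i> * complex_of_real (t * ln u)"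
    by (simp add: complex_eq_iff)
  also have "exp (complex_of_real ((c-1) * ln u) + \<i> * complex_of_real (t * ln u)) = complex_of_real (u powr (c - 1)) * iexp (t * ln u)"
    using u by (subst exp_add, subst exp_of_real, simp add: powr_def)
  finally show ?thesis
    by (simp add: gd_f_def scaleR_conv_of_real field_simps)
qed

lemma gd_char:
  assumes c: "c > 0"
  shows "char (gd_M c) t = Gamma (Complex c t) / complex_of_real (Gamma c)"
proof -
  define h where "h u = gd_p c u *\<^sub>R iexp (t * ln u)" for u
  have "char (gd_M c) t = (CLINT u|gd_G c. iexp (t * ln u))"
    unfolding char_def gd_M_def by (subst integral_distr) (auto simp: gd_G_def)
  also have "\<dots> = (CLINT u|lborel. h u)"
    unfolding gd_G_def h_def by (subst integral_density) (auto simp: gd_p_nonneg c)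
  finally have 1: "char (gd_M c) t = (CLINT u|lborel. h u)" .
  have hm: "h \<in> borel_measurable borel" unfolding h_def by measurable
  have ip: "integrable lborel (gd_p c)"
    by (rule integrableI_nn_integral_finite[where x=1]) (auto simp: gd_p_nonneg c gd_nn)
  have ih: "integrable lborel h"
    by (rule Bochner_Integration.integrable_bound[OF ip]) (auto simp: h_def gd_p_nonneg c intro: hm)
  have 2: "(h has_integral (CLINT u|lborel. h u)) UNIV"
    by (rule has_integral_integral_lborel[OF ih])
  have z: "Re (Complex c t) > 0" using c by simp
  have "((\<lambda>u. complex_of_real u powr (Complex c t - 1) / complex_of_real (exp u) / complex_of_real (Gamma c))
     has_integral Gamma (Complex c t) / complex_of_real (Gamma c)) {0<..}"
    by (rule has_integral_divide[OF Gamma_integral_complex'[OF z]])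
  hence "((\<lambda>u. if u \<in> {0<..} then complex_of_real u powr (Complex c t - 1) / complex_of_real (exp u) / complex_of_real (Gamma c) else 0)
     has_integral Gamma (Complex c t) / complex_of_real (Gamma c)) UNIV"
    by (subst has_integral_restrict_UNIV)
  also have "(\<lambda>u. if u \<in> {0<..} then complex_of_real u powr (Complex c t - 1) / complex_of_real (exp u) / complex_of_real (Gamma c) else 0) = h"
  proof
    fix u :: real
    show "(if u \<in> {0<..} then complex_of_real u powr (Complex c t - 1) / complex_of_real (exp u) / complex_of_real (Gamma c) else 0) = h u"
      using gd_pointwise[of u c t] by (auto simp: h_def gd_p_def gd_f_def)
  qed
  finally have 3: "(h has_integral Gamma (Complex c t) / complex_of_real (Gamma c)) UNIV" .
  show ?thesis using 1 2 3 has_integral_unique by metis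
qed


lemma Complex_not_nonpos_Ints: "c > 0 \<Longrightarrow> Complex c t \<notin> \<int>\<^sub>\<le>\<^sub>0"
  by (auto elim!: nonpos_Ints_cases simp: complex_eq_iff)

lemma Gamma_line_cont: "c > 0 \<Longrightarrow> continuous_on UNIV (\<lambda>t. Gamma (Complex c t))"
  unfolding Complex_eq
  by (intro continuous_at_imp_continuous_on ballI continuous_intros)
     (metis Complex_eq Complex_not_nonpos_Ints)

lemma Gamma_line_meas[measurable]: "c > 0 \<Longrightarrow> (\<lambda>t. Gamma (Complex c t)) \<in> borel_measurable borel"
  by (rule borel_measurable_continuous_onI[OF Gamma_line_cont])

lemma integrable_inv_1_sq: "integrable lborel (\<lambda>x::real. inverse (1 + x^2))"
  using integrable_inverse_1_plus_square by (simp add: set_integrable_def)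

lemma integrable_Gamma_line_norm: "(c::real) \<ge> 1 \<Longrightarrow> integrable lborel (\<lambda>t. Gamma c * (c*(c+1)) * inverse (1 + t^2))"
  by (rule integrable_mult_right) (rule integrable_inv_1_sq)

lemma integrable_Gamma_line: assumes c: "c \<ge> 1" shows "integrable lborel (\<lambda>t. Gamma (Complex c t))"
proof (rule Bochner_Integration.integrable_bound[OF integrable_Gamma_line_norm[OF c]])
  show "(\<lambda>t. Gamma (Complex c t)) \<in> borel_measurable lborel" using c by simp
  show "AE t in lborel. norm (Gamma (Complex c t)) \<le> norm (Gamma c * (c*(c+1)) * inverse (1 + t^2))"
  proof (intro AE_I2)
    fix t :: real
    have "norm (Gamma (Complex c t)) \<le> Gamma c * (c*(c+1)) / (1 + t^2)" by (rule norm_Gamma_bound[OF c])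
    also have "\<dots> = norm (Gamma c * (c*(c+1)) * inverse (1 + t^2))"
      using c Gamma_real_pos[of c] by (simp add: abs_mult divide_inverse add_pos_nonneg)
    finally show "norm (Gamma (Complex c t)) \<le> norm (Gamma c * (c*(c+1)) * inverse (1 + t^2))" .
  qed
qed

lemma gd_char_integrable: "c \<ge> 1 \<Longrightarrow> integrable lborel (char (gd_M c))"
proof -
  assume c: "c \<ge> 1"
  have "char (gd_M c) = (\<lambda>t. Gamma (Complex c t) / complex_of_real (Gamma c))"
    using c by (intro ext gd_char) simp
  thus ?thesis using integrable_Gamma_line[OF c] by simp
qed


lemma gd_f_cont: "c > 0 \<Longrightarrow> continuous_on {0<..} (gd_f c)"
proof -
  assume c: "c > 0"
  have "Gamma c \<noteq> 0" using Gamma_real_pos[OF c] by simp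
  thus ?thesis unfolding gd_f_def by (intro continuous_intros) auto
qed

lemma gd_f_integrable: "c > 0 \<Longrightarrow> 0 < A \<Longrightarrow> gd_f c integrable_on {A..B}"
  by (rule integrable_continuous_interval, rule continuous_on_subset[OF gd_f_cont]) auto

lemma gd_M_emeasure: "S \<in> sets borel \<Longrightarrow> emeasure (gd_M c) S = (\<integral>\<^sup>+u. ennreal (gd_p c u) * indicator (ln -` S) u \<partial>lborel)"
proof -
  assume S: "S \<in> sets borel"
  have "ln -` S \<in> sets borel" using measurable_sets[of ln borel borel S] S by simp
  thus ?thesis unfolding gd_M_def gd_G_def using S
    by (subst emeasure_distr) (auto simp: emeasure_density)
qed

lemma gd_M_singleton: assumes c: "c > 0" shows "measure (gd_M c) {a} = 0"
proof -
  have "emeasure (gd_M c) {a} = (\<integral>\<^sup>+u. ennreal (gd_p c u) * indicator (ln -` {a}) u \<partial>lborel)"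
    by (rule gd_M_emeasure) simp
  also have "\<dots> = (\<integral>\<^sup>+(u::real). 0 \<partial>lborel)"
  proof (rule nn_integral_cong_AE)
    show "AE u in lborel. ennreal (gd_p c u) * indicator (ln -` {a}) u = 0"
      using AE_lborel_singleton[of "exp a"]
    proof eventually_elim
      fix u :: real assume u: "u \<noteq> exp a"
      show "ennreal (gd_p c u) * indicator (ln -` {a}) u = 0"
      proof (cases "u > 0")
        case True
        hence "ln u \<noteq> a" using u by auto
        thus ?thesis by simp
      next
        case False
        hence "gd_p c u = 0" by (auto simp: gd_p_def gd_f_def)
        thus ?thesis by simp
      qed
    qed
  qed
  finally show ?thesis by (simp add: measure_def)
qed

lemma gd_M_interval:
  assumes c: "c > 0" and ab: "a \<le> b"
  shows "measure (gd_M c) {a<..b} = integral {exp a..exp b} (gd_f c)"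
proof -
  have int: "(gd_f c has_integral integral {exp a..exp b} (gd_f c)) {exp a..exp b}"
    by (rule integrable_integral, rule gd_f_integrable[OF c]) simp
  have I0: "integral {exp a..exp b} (gd_f c) \<ge> 0"
    by (rule integral_nonneg[OF gd_f_integrable[OF c]]) (auto simp: gd_f_nonneg c)
  have "emeasure (gd_M c) {a<..b} = (\<integral>\<^sup>+u. ennreal (gd_p c u) * indicator (ln -` {a<..b}) u \<partial>lborel)"
    by (rule gd_M_emeasure) simp
  also have "\<dots> = (\<integral>\<^sup>+u. ennreal (gd_f c u) * indicator {exp a..exp b} u \<partial>lborel)"
  proof (rule nn_integral_cong_AE)
    show "AE u in lborel. ennreal (gd_p c u) * indicator (ln -` {a<..b}) u = ennreal (gd_f c u) * indicator {exp a..exp b} u"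
      using AE_lborel_singleton[of "exp a"]
    proof eventually_elim
      fix u :: real assume u: "u \<noteq> exp a"
      show "ennreal (gd_p c u) * indicator (ln -` {a<..b}) u = ennreal (gd_f c u) * indicator {exp a..exp b} u"
      proof (cases "u > 0")
        case True
        have "(u \<in> ln -` {a<..b}) = (u \<in> {exp a..exp b})"
        proof -
          have 1: "a < ln u \<longleftrightarrow> exp a < u" by (metis exp_less_cancel_iff exp_ln True)
          have 2: "ln u \<le> b \<longleftrightarrow> u \<le> exp b" by (metis exp_le_cancel_iff exp_ln True)
          show ?thesis using 1 2 u by auto
        qed
        thus ?thesis using True by (auto simp: gd_p_def split: split_indicator)
      next
        case False
        hence "gd_p c u = 0" by (auto simp: gd_p_def gd_f_def)
        moreover have "u \<notin> {exp a..exp b}" using False by (auto, meson exp_gt_zero order.strict_trans2)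
        ultimately show ?thesis by simp
      qed
    qed
  qed
  also have "\<dots> = ennreal (integral {exp a..exp b} (gd_f c))"
    by (rule nn_integral_has_integral_lebesgue'[OF _ int]) (simp add: gd_f_nonneg c)
  finally show ?thesis using I0 by (simp add: measure_def)
qed


definition levF :: "real \<Rightarrow> real \<Rightarrow> real \<Rightarrow> complex" where
  "levF a b t = (iexp (- (t * a)) - iexp (- (t * b))) / (\<i> * complex_of_real t)"

lemma levF_meas[measurable]: "levF a b \<in> borel_measurable borel"
  unfolding levF_def by measurable

lemma levF_bound: assumes "a \<le> b" shows "norm (levF a b t) \<le> b - a"
proof (cases "t = 0")
  case True thus ?thesis using assms by (simp add: levF_def)
next
  case False
  have "levF a b t = (iexp ((-t) * b) - iexp ((-t) * a)) / (\<i> * complex_of_real (-t))"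
    unfolding levF_def using False by (simp add: field_simps)
  thus ?thesis using Levy_Inversion_aux2[OF assms, of "-t"] False by simp
qed

lemma levy_full:
  assumes c: "c \<ge> 1" and ab: "a \<le> b"
  shows "(CLBINT t. levF a b t * char (gd_M c) t) = complex_of_real (2 * pi * measure (gd_M c) {a<..b})"
proof -
  have c0: "c > 0" using c by simp
  interpret real_distribution "gd_M c" by (rule gd_M_real_distribution[OF c0])
  define \<phi> where "\<phi> = char (gd_M c)"
  have \<phi>m[measurable]: "\<phi> \<in> borel_measurable borel" unfolding \<phi>_def by (rule char_measurable)
  have \<phi>i: "integrable lborel \<phi>" unfolding \<phi>_def by (rule gd_char_integrable[OF c])
  have lev: "(\<lambda>T::nat. complex_of_real (1 / (2 * pi)) *
        (CLBINT t=ereal (real_of_int (- int T))..ereal (real T). levF a b t * \<phi> t))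
     \<longlonglongrightarrow> complex_of_real (measure (gd_M c) {a<..b})"
    unfolding levF_def \<phi>_def
    by (rule Levy_Inversion[OF ab gd_M_singleton[OF c0] gd_M_singleton[OF c0]])
  define s where "s T t = indicator {- real T<..<real T} t *\<^sub>R (levF a b t * \<phi> t)" for T :: nat and t :: real
  have eqs: "(CLBINT t=ereal (real_of_int (- int T))..ereal (real T). levF a b t * \<phi> t) = (CLBINT t. s T t)" for T :: nat
    by (simp add: interval_lebesgue_integral_def set_lebesgue_integral_def s_def)
  have "(\<lambda>T. CLBINT t. s T t) \<longlonglongrightarrow> (CLBINT t. levF a b t * \<phi> t)"
  proof (rule integral_dominated_convergence[where w = "\<lambda>t. (b - a) * norm (\<phi> t)"])
    show "(\<lambda>t. levF a b t * \<phi> t) \<in> borel_measurable lborel" by measurable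
    show "\<And>i. s i \<in> borel_measurable lborel" unfolding s_def by measurable
    show "integrable lborel (\<lambda>t. (b - a) * norm (\<phi> t))" using \<phi>i by simp
    show "AE t in lborel. (\<lambda>i. s i t) \<longlonglongrightarrow> levF a b t * \<phi> t"
    proof (intro AE_I2)
      fix t :: real
      obtain N :: nat where N: "\<bar>t\<bar> < real N" using reals_Archimedean2 by blast
      have "eventually (\<lambda>i. s i t = levF a b t * \<phi> t) sequentially"
        using eventually_ge_at_top[of N]
      proof eventually_elim
        case (elim i)
        hence "\<bar>t\<bar> < real i" using N by linarith
        hence "t \<in> {- real i<..<real i}" by auto
        thus ?case by (simp add: s_def)
      qed
      thus "(\<lambda>i. s i t) \<longlonglongrightarrow> levF a b t * \<phi> t" by (rule tendsto_eventually)
    qed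
    show "AE t in lborel. norm (s i t) \<le> (b - a) * norm (\<phi> t)" for i
    proof (intro AE_I2)
      fix t :: real
      have "norm (s i t) \<le> norm (levF a b t) * norm (\<phi> t)"
        by (auto simp: s_def norm_mult split: split_indicator)
      also have "\<dots> \<le> (b - a) * norm (\<phi> t)" by (intro mult_right_mono levF_bound ab) auto
      finally show "norm (s i t) \<le> (b - a) * norm (\<phi> t)" .
    qed
  qed
  hence "(\<lambda>T::nat. complex_of_real (1 / (2 * pi)) *
        (CLBINT t=ereal (real_of_int (- int T))..ereal (real T). levF a b t * \<phi> t))
     \<longlonglongrightarrow> complex_of_real (1 / (2 * pi)) * (CLBINT t. levF a b t * \<phi> t)"
    unfolding eqs by (intro tendsto_intros)
  with lev have "complex_of_real (1 / (2 * pi)) * (CLBINT t. levF a b t * \<phi> t) = complex_of_real (measure (gd_M c) {a<..b})"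
    using LIMSEQ_unique by blast
  thus ?thesis unfolding \<phi>_def by (simp add: field_simps)
qed


definition ghat :: "real \<Rightarrow> real \<Rightarrow> complex" where
  "ghat c x = (CLBINT t. iexp (- (t * x)) * char (gd_M c) t)"

lemma ghat_cont: assumes c: "c \<ge> 1" shows "continuous_on UNIV (ghat c)"
proof -
  have c0: "c > 0" using c by simp
  interpret real_distribution "gd_M c" by (rule gd_M_real_distribution[OF c0])
  define \<phi> where "\<phi> = char (gd_M c)"
  have \<phi>m[measurable]: "\<phi> \<in> borel_measurable borel" unfolding \<phi>_def by (rule char_measurable)
  have \<phi>i: "integrable lborel \<phi>" unfolding \<phi>_def by (rule gd_char_integrable[OF c])
  have "isCont (ghat c) x" for x
    unfolding continuous_at_sequentially
  proof (intro allI impI)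
    fix X assume X: "X \<longlonglongrightarrow> x"
    have "(\<lambda>n. CLBINT t. iexp (- (t * X n)) * \<phi> t) \<longlonglongrightarrow> (CLBINT t. iexp (- (t * x)) * \<phi> t)"
    proof (rule integral_dominated_convergence[where w = "\<lambda>t. norm (\<phi> t)"])
      show "(\<lambda>t. iexp (- (t * x)) * \<phi> t) \<in> borel_measurable lborel" by measurable
      show "\<And>i. (\<lambda>t. iexp (- (t * X i)) * \<phi> t) \<in> borel_measurable lborel" by measurable
      show "integrable lborel (\<lambda>t. norm (\<phi> t))" using \<phi>i by simp
      show "AE t in lborel. (\<lambda>i. iexp (- (t * X i)) * \<phi> t) \<longlonglongrightarrow> iexp (- (t * x)) * \<phi> t"
        by (intro AE_I2 tendsto_intros X)
      show "\<And>i. AE t in lborel. norm (iexp (- (t * X i)) * \<phi> t) \<le> norm (\<phi> t)"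
        by (intro AE_I2) (simp add: norm_mult)
    qed
    thus "(ghat c \<circ> X) \<longlonglongrightarrow> ghat c x" by (simp add: ghat_def \<phi>_def o_def)
  qed
  thus ?thesis by (intro continuous_at_imp_continuous_on) auto
qed

lemma levF_integral:
  assumes t: "t \<noteq> 0" and ab: "a \<le> b"
  shows "levF a b t = (CLBINT x. indicator {a..b} x *\<^sub>R iexp (- (t * x)))"
proof -
  define G where "G x = iexp (- (t * x)) / (- (\<i> * complex_of_real t))" for x
  have "(CLBINT x=a..b. iexp (- (t * x))) = G b - G a"
  proof (rule interval_integral_FTC_finite)
    show "continuous_on {min a b..max a b} (\<lambda>x. iexp (- (t * x)))" by (intro continuous_intros)
    fix x assume "min a b \<le> x" "x \<le> max a b"
    show "(G has_vector_derivative iexp (- (t * x))) (at x within {min a b..max a b})"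
    proof -
      define h where "h z = exp (- (\<i> * complex_of_real t * z)) / (- (\<i> * complex_of_real t))" for z
      have "(h has_field_derivative exp (- (\<i> * complex_of_real t * complex_of_real x))) (at (complex_of_real x))"
        unfolding h_def using t by (auto intro!: derivative_eq_intros simp: field_simps)
      hence "((\<lambda>x. h (complex_of_real x)) has_vector_derivative exp (- (\<i> * complex_of_real t * complex_of_real x))) (at x within {min a b..max a b})"
        by (rule has_vector_derivative_real_field)
      moreover have "(\<lambda>x. h (complex_of_real x)) = G" unfolding h_def G_def by (auto simp: mult_ac)
      ultimately show ?thesis by (simp add: mult_ac)
    qed
  qed
  also have "G b - G a = levF a b t" unfolding G_def levF_def using t by (simp add: field_simps)
  also have "(CLBINT x=a..b. iexp (- (t * x))) = (CLBINT x. indicator {a..b} x *\<^sub>R iexp (- (t * x)))"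
    using ab by (simp add: interval_integral_Icc set_lebesgue_integral_def)
  finally show ?thesis by simp
qed


lemma fubini_step:
  assumes c: "c \<ge> 1" and ab: "a \<le> b"
  shows "(CLBINT t. levF a b t * char (gd_M c) t) = integral {a..b} (ghat c)"
proof -
  have c0: "c > 0" using c by simp
  interpret real_distribution "gd_M c" by (rule gd_M_real_distribution[OF c0])
  define \<phi> where "\<phi> = char (gd_M c)"
  have \<phi>m[measurable]: "\<phi> \<in> borel_measurable borel" unfolding \<phi>_def by (rule char_measurable)
  have \<phi>i: "integrable lborel \<phi>" unfolding \<phi>_def by (rule gd_char_integrable[OF c])
  define H where "H p = indicator {a..b} (snd p) *\<^sub>R (iexp (- (fst p * snd p)) * \<phi> (fst p))" for p :: "real \<times> real"
  have Hm[measurable]: "H \<in> borel_measurable (lborel \<Otimes>\<^sub>M lborel)" unfolding H_def by measurable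
  have 1: "(CLBINT t. levF a b t * \<phi> t) = (CLBINT t. (CLBINT x. H (t, x)))"
  proof (rule integral_cong_AE)
    show "(\<lambda>t. levF a b t * \<phi> t) \<in> borel_measurable lborel" by measurable
    show "(\<lambda>t. CLBINT x. H (t, x)) \<in> borel_measurable lborel" by measurable
    show "AE t in lborel. levF a b t * \<phi> t = (CLBINT x. H (t, x))"
      using AE_lborel_singleton[of 0]
    proof eventually_elim
      fix t :: real assume t: "t \<noteq> 0"
      have "levF a b t * \<phi> t = (CLBINT x. indicator {a..b} x *\<^sub>R iexp (- (t * x))) * \<phi> t"
        by (simp add: levF_integral[OF t ab])
      also have "\<dots> = (CLBINT x. (indicator {a..b} x *\<^sub>R iexp (- (t * x))) * \<phi> t)"
        by (rule integral_mult_left_zero[symmetric])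
      also have "\<dots> = (CLBINT x. H (t, x))"
        by (simp add: H_def)
      finally show "levF a b t * \<phi> t = (CLBINT x. H (t, x))" .
    qed
  qed
  have Hi: "integrable (lborel \<Otimes>\<^sub>M lborel) H"
  proof (rule lborel_pair.Fubini_integrable)
    have "(\<lambda>t. \<integral>x. norm (H (t, x)) \<partial>lborel) = (\<lambda>t. (b - a) * norm (\<phi> t))"
    proof
      fix t :: real
      have "(\<integral>x. norm (H (t, x)) \<partial>lborel) = (\<integral>x. indicator {a..b} x * norm (\<phi> t) \<partial>lborel)"
        by (rule Bochner_Integration.integral_cong) (auto simp: H_def norm_mult split: split_indicator)
      also have "\<dots> = (b - a) * norm (\<phi> t)" using ab by simp
      finally show "(\<integral>x. norm (H (t, x)) \<partial>lborel) = (b - a) * norm (\<phi> t)" .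
    qed
    thus "integrable lborel (\<lambda>t. \<integral>x. norm (H (t, x)) \<partial>lborel)" using \<phi>i by simp
    show "AE t in lborel. integrable lborel (\<lambda>x. H (t, x))"
    proof (intro AE_I2)
      fix t :: real
      have "integrable lborel (\<lambda>x. indicator {a..b} x *\<^sub>R (iexp (- (t * x)) * \<phi> t))"
        by (intro borel_integrable_compact continuous_intros) auto
      thus "integrable lborel (\<lambda>x. H (t, x))" by (simp add: H_def)
    qed
  qed simp
  have 2: "(CLBINT t. (CLBINT x. H (t, x))) = (CLBINT x. (CLBINT t. H (t, x)))"
  proof -
    have "integrable (lborel \<Otimes>\<^sub>M lborel) (\<lambda>(t, x). H (t, x))" using Hi by simp
    from lborel_pair.Fubini_integral[OF this] show ?thesis by simp
  qed
  have 3: "(CLBINT x. (CLBINT t. H (t, x))) = (CLBINT x. indicator {a..b} x *\<^sub>R ghat c x)"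
    by (rule Bochner_Integration.integral_cong) (simp_all add: H_def ghat_def \<phi>_def)
  have si: "set_integrable lborel {a..b} (ghat c)"
    unfolding set_integrable_def
    by (rule borel_integrable_compact) (auto intro: continuous_on_subset[OF ghat_cont[OF c]])
  have 4: "(CLBINT x. indicator {a..b} x *\<^sub>R ghat c x) = integral {a..b} (ghat c)"
    using set_borel_integral_eq_integral(2)[OF si] by (simp add: set_lebesgue_integral_def)
  show ?thesis using 1 2 3 4 by (simp add: \<phi>_def)
qed


lemma ghat_value:
  assumes c: "c \<ge> 1"
  shows "ghat c \<beta> = complex_of_real (2 * pi * (gd_f c (exp \<beta>) * exp \<beta>))"
proof -
  have c0: "c > 0" using c by simp
  define a where "a = \<beta> - 1"
  define B where "B = \<beta> + 1"
  define L where "L y = integral {a..y} (ghat c)" for y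
  define I where "I w = integral {exp a..w} (gd_f c)" for w
  define R where "R y = complex_of_real (2 * pi * I (exp y))" for y
  have eq: "R y = L y" if "y \<in> {a<..}" for y
  proof -
    have ay: "a \<le> y" using that by simp
    have "L y = (CLBINT t. levF a y t * char (gd_M c) t)"
      unfolding L_def by (rule fubini_step[OF c ay, symmetric])
    also have "\<dots> = complex_of_real (2 * pi * measure (gd_M c) {a<..y})" by (rule levy_full[OF c ay])
    also have "\<dots> = R y" unfolding R_def I_def by (simp add: gd_M_interval[OF c0 ay])
    finally show ?thesis by simp
  qed
  have int\<beta>: "\<beta> \<in> interior {a..B}" by (simp add: a_def B_def)
  have "(L has_vector_derivative ghat c \<beta>) (at \<beta> within {a..B})"
    unfolding L_def
    by (rule integral_has_vector_derivative) (auto intro: continuous_on_subset[OF ghat_cont[OF c]] simp: a_def B_def)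
  hence Ld: "(L has_vector_derivative ghat c \<beta>) (at \<beta>)" using at_within_interior[OF int\<beta>] by simp
  have int2: "exp \<beta> \<in> interior {exp a..exp B}" by (simp add: a_def B_def)
  have "(I has_vector_derivative gd_f c (exp \<beta>)) (at (exp \<beta>) within {exp a..exp B})"
    unfolding I_def
    by (rule integral_has_vector_derivative, rule continuous_on_subset[OF gd_f_cont[OF c0]])
       (auto simp: a_def B_def intro: less_le_trans[OF exp_gt_zero])
  hence "(I has_vector_derivative gd_f c (exp \<beta>)) (at (exp \<beta>))" using at_within_interior[OF int2] by simp
  hence Id: "(I has_real_derivative gd_f c (exp \<beta>)) (at (exp \<beta>))"
    by (simp add: has_real_derivative_iff_has_vector_derivative)
  have "((\<lambda>y. I (exp y)) has_real_derivative gd_f c (exp \<beta>) * exp \<beta>) (at \<beta>)"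
    using DERIV_chain2[OF Id DERIV_exp] by simp
  hence "((\<lambda>y. 2 * pi * I (exp y)) has_real_derivative 2 * pi * (gd_f c (exp \<beta>) * exp \<beta>)) (at \<beta>)"
    by (rule DERIV_cmult)
  hence Rd: "(R has_vector_derivative complex_of_real (2 * pi * (gd_f c (exp \<beta>) * exp \<beta>))) (at \<beta>)"
    unfolding R_def by (rule has_vector_derivative_of_real)
  have "(L has_vector_derivative complex_of_real (2 * pi * (gd_f c (exp \<beta>) * exp \<beta>))) (at \<beta>)"
    by (rule has_vector_derivative_transform_within_open[OF Rd, of "{a<..}"]) (auto simp: a_def eq)
  thus ?thesis using Ld vector_derivative_unique_at by blast
qed

lemma mellin_gamma:
  assumes c: "c \<ge> 1"
  shows "integrable lborel (\<lambda>t. Gamma (Complex c t) * exp (Complex c t * complex_of_real b))"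
    and "(\<integral>t. Gamma (Complex c t) * exp (Complex c t * complex_of_real b) \<partial>lborel) = complex_of_real (2 * pi * exp (- exp (- b)))"
proof -
  have c0: "c > 0" using c by simp
  define K where "K = complex_of_real (exp (c * b) * Gamma c)"
  have pt: "Gamma (Complex c t) * exp (Complex c t * complex_of_real b) = K * (iexp (- (t * (-b))) * char (gd_M c) t)" for t
  proof -
    have "Complex c t * complex_of_real b = complex_of_real (c * b) + \<i> * complex_of_real (t * b)"
      by (simp add: complex_eq_iff)
    hence "exp (Complex c t * complex_of_real b) = complex_of_real (exp (c * b)) * iexp (t * b)"
      by (simp only:, subst exp_add, subst exp_of_real) simp
    thus ?thesis unfolding K_def using gd_char[OF c0, of t] Gamma_real_pos[OF c0] by (simp add: field_simps)
  qed
  have i: "integrable lborel (\<lambda>t. iexp (- (t * (-b))) * char (gd_M c) t)"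
  proof (rule Bochner_Integration.integrable_bound[OF gd_char_integrable[OF c]])
    interpret real_distribution "gd_M c" by (rule gd_M_real_distribution[OF c0])
    show "(\<lambda>t. iexp (- (t * (-b))) * char (gd_M c) t) \<in> borel_measurable lborel" by measurable
  qed (simp add: norm_mult)
  show "integrable lborel (\<lambda>t. Gamma (Complex c t) * exp (Complex c t * complex_of_real b))"
    unfolding pt using i by simp
  have "(\<integral>t. Gamma (Complex c t) * exp (Complex c t * complex_of_real b) \<partial>lborel) = K * ghat c (-b)"
    unfolding pt ghat_def by simp
  also have "\<dots> = complex_of_real (2 * pi * exp (- exp (- b)))"
    unfolding ghat_value[OF c] K_def using Gamma_real_pos[OF c0]
    by (simp add: gd_f_def powr_def exp_minus ln_div field_simps flip: exp_add exp_diff of_real_mult)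
  finally show "(\<integral>t. Gamma (Complex c t) * exp (Complex c t * complex_of_real b) \<partial>lborel) = complex_of_real (2 * pi * exp (- exp (- b)))" .
qed


lemma powr_Suc_complex: "(of_nat (Suc m) :: complex) powr z = exp (z * complex_of_real (ln (real (Suc m))))"
proof -
  have e: "(of_nat (Suc m) :: complex) = complex_of_real (real (Suc m))" by simp
  have l: "Ln (complex_of_real (real (Suc m))) = complex_of_real (ln (real (Suc m)))" using Ln_of_real[of "real (Suc m)"] by simp
  have nz: "complex_of_real (real (Suc m)) \<noteq> 0" by (metis of_nat_0_neq of_real_eq_0_iff of_nat_eq_0_iff Zero_not_Suc)
  show ?thesis unfolding e powr_def if_not_P[OF nz] l by (rule refl)
qed

lemma norm_exp_Complex: "norm (exp (Complex c t * complex_of_real y)) = exp (c * y)"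
  by simp

lemma summable_Suc_powr: "p > 1 \<Longrightarrow> summable (\<lambda>m. real (Suc m) powr (- p))"
  using summable_real_powr_iff[of "-p"] summable_Suc_iff[of "\<lambda>n. real n powr (-p)"] by simp

lemma exp_mult_ln_Suc: "exp (c * (b - ln (real (Suc m)))) = exp (c * b) * real (Suc m) powr (- c)"
  by (simp add: powr_def exp_diff right_diff_distrib exp_minus field_simps)


lemma integrable_norm_Gamma_line: "c \<ge> 1 \<Longrightarrow> integrable lborel (\<lambda>t. norm (Gamma (Complex c t)))"
  using integrable_Gamma_line by (rule integrable_norm)

lemma exp_exp_ln_Suc: "exp (- exp (- (b - ln (real (Suc m))))) = exp (- (real (Suc m) * exp (- b)))"
proof -
  have "exp (- (b - ln (real (Suc m)))) = real (Suc m) * exp (- b)"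
    by (simp add: exp_diff exp_minus field_simps del: of_nat_Suc)
  thus ?thesis by simp
qed

lemma norm_powr_Suc: "norm ((of_nat (Suc m) :: complex) powr Complex c t) = real (Suc m) powr c"
  by (simp add: powr_Suc_complex powr_def del: of_nat_Suc)

lemma Lgen:
  fixes a :: "nat \<Rightarrow> complex" and B c b :: real
  assumes c: "c > 1" and aB: "\<And>m. norm (a m) \<le> B"
  shows "integrable lborel (\<lambda>t. Gamma (Complex c t) * (\<Sum>m. a m / of_nat (Suc m) powr (Complex c t)) * exp (Complex c t * complex_of_real b))"
    and "(\<integral>t. Gamma (Complex c t) * (\<Sum>m. a m / of_nat (Suc m) powr (Complex c t)) * exp (Complex c t * complex_of_real b) \<partial>lborel)
          = complex_of_real (2*pi) * (\<Sum>m. a m * complex_of_real (exp (- (real (Suc m) * exp (-b)))))"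
proof -
  have c1: "c \<ge> 1" using c by simp
  define f where "f m t = a m * (Gamma (Complex c t) * exp (Complex c t * complex_of_real (b - ln (real (Suc m)))))" for m t
  define g where "g m = a m * complex_of_real (exp (- (real (Suc m) * exp (-b))))" for m
  have fi: "integrable lborel (f m)" for m
    unfolding f_def by (intro integrable_mult_right mellin_gamma(1)[OF c1])
  have el: "exp (ln (real (Suc m)) - b) = real (Suc m) * exp (- b)" for m
  proof -
    have "exp (ln (real (Suc m)) - b) = exp (ln (real (Suc m))) / exp b" by (rule exp_diff)
    also have "exp (ln (real (Suc m))) = real (Suc m)" by (rule exp_ln) simp
    finally show ?thesis by (simp add: exp_minus field_simps del: of_nat_Suc)
  qed
  have fI: "integral\<^sup>L lborel (f m) = complex_of_real (2*pi) * g m" for m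
    unfolding f_def g_def using mellin_gamma(2)[OF c1, of "b - ln (real (Suc m))"]
    by (simp add: exp_exp_ln_Suc el del: of_nat_Suc)
  have nf: "norm (f m t) = norm (a m) * norm (Gamma (Complex c t)) * exp (c * b) * real (Suc m) powr (- c)" for m t
    unfolding f_def by (simp add: norm_mult exp_mult_ln_Suc del: of_nat_Suc)
  have B0: "B \<ge> 0" using aB[of 0] norm_ge_zero order_trans by blast
  have sp: "summable (\<lambda>m. real (Suc m) powr (- c))" by (rule summable_Suc_powr[OF c])
  have sum1: "summable (\<lambda>m. norm (f m t))" for t
  proof (rule summable_comparison_test'[where g = "\<lambda>m. (B * norm (Gamma (Complex c t)) * exp (c * b)) * real (Suc m) powr (- c)"])
    show "summable (\<lambda>m. (B * norm (Gamma (Complex c t)) * exp (c * b)) * real (Suc m) powr (- c))"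
      using sp by (rule summable_mult)
    fix m :: nat
    show "norm (norm (f m t)) \<le> (B * norm (Gamma (Complex c t)) * exp (c * b)) * real (Suc m) powr (- c)"
      unfolding nf using aB[of m] by (simp add: mult_right_mono mult_ac)
  qed
  define IG where "IG = (\<integral>t. norm (Gamma (Complex c t)) \<partial>lborel)"
  have IG0: "IG \<ge> 0" unfolding IG_def by simp
  have inf: "(\<integral>t. norm (f m t) \<partial>lborel) = norm (a m) * exp (c * b) * real (Suc m) powr (- c) * IG" for m
  proof -
    have "(\<integral>t. norm (f m t) \<partial>lborel) = (\<integral>t. (norm (a m) * exp (c * b) * real (Suc m) powr (- c)) * norm (Gamma (Complex c t)) \<partial>lborel)"
      by (rule Bochner_Integration.integral_cong) (auto simp: nf mult_ac)
    also have "\<dots> = norm (a m) * exp (c * b) * real (Suc m) powr (- c) * IG"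
      unfolding IG_def by simp
    finally show ?thesis .
  qed
  have sum2: "summable (\<lambda>m. \<integral>t. norm (f m t) \<partial>lborel)"
    unfolding inf
  proof (rule summable_comparison_test'[where g = "\<lambda>m. (B * exp (c * b) * IG) * real (Suc m) powr (- c)"])
    show "summable (\<lambda>m. (B * exp (c * b) * IG) * real (Suc m) powr (- c))"
      using sp by (rule summable_mult)
    fix m :: nat
    show "norm (norm (a m) * exp (c * b) * real (Suc m) powr (- c) * IG) \<le> (B * exp (c * b) * IG) * real (Suc m) powr (- c)"
    proof -
      have "norm (a m) * (exp (c * b) * real (Suc m) powr (- c) * IG) \<le> B * (exp (c * b) * real (Suc m) powr (- c) * IG)"
        using aB[of m] IG0 by (intro mult_right_mono) auto
      thus ?thesis using IG0 by (simp add: abs_mult mult_ac del: of_nat_Suc)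
    qed
  qed
  have pw: "Gamma (Complex c t) * (\<Sum>m. a m / of_nat (Suc m) powr (Complex c t)) * exp (Complex c t * complex_of_real b) = (\<Sum>m. f m t)" for t
  proof -
    have sD: "summable (\<lambda>m. a m / of_nat (Suc m) powr (Complex c t))"
    proof (rule summable_comparison_test'[where g = "\<lambda>m. B * real (Suc m) powr (- c)"])
      show "summable (\<lambda>m. B * real (Suc m) powr (- c))" using sp by (rule summable_mult)
      fix m :: nat
      have "norm (a m / of_nat (Suc m) powr (Complex c t)) = norm (a m) * real (Suc m) powr (- c)"
        unfolding norm_divide norm_powr_Suc by (simp add: powr_minus divide_inverse del: of_nat_Suc)
      thus "norm (a m / of_nat (Suc m) powr (Complex c t)) \<le> B * real (Suc m) powr (- c)"
        using aB[of m] by (simp add: mult_right_mono)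
    qed
    define K where "K = Gamma (Complex c t) * exp (Complex c t * complex_of_real b)"
    have "Gamma (Complex c t) * (\<Sum>m. a m / of_nat (Suc m) powr (Complex c t)) * exp (Complex c t * complex_of_real b)
        = (\<Sum>m. a m / of_nat (Suc m) powr (Complex c t)) * K" unfolding K_def by (simp add: mult_ac)
    also have "\<dots> = (\<Sum>m. a m / of_nat (Suc m) powr (Complex c t) * K)" by (rule suminf_mult2[OF sD])
    also have "\<dots> = (\<Sum>m. f m t)"
    proof (rule suminf_cong)
      fix m
      have "Complex c t * complex_of_real (b - ln (real (Suc m))) = Complex c t * complex_of_real b - Complex c t * complex_of_real (ln (real (Suc m)))"
        by (simp add: algebra_simps)
      hence "exp (Complex c t * complex_of_real (b - ln (real (Suc m)))) = exp (Complex c t * complex_of_real b) / exp (Complex c t * complex_of_real (ln (real (Suc m))))"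
        by (simp add: exp_diff)
      thus "a m / of_nat (Suc m) powr (Complex c t) * K = f m t"
        unfolding f_def K_def powr_Suc_complex by (simp add: field_simps)
    qed
    finally show ?thesis .
  qed
  have Si: "integrable lborel (\<lambda>t. \<Sum>m. f m t)"
    by (rule integrable_suminf[OF fi AE_I2[OF sum1] sum2])
  have SI: "(\<integral>t. (\<Sum>m. f m t) \<partial>lborel) = (\<Sum>m. integral\<^sup>L lborel (f m))"
    by (rule integral_suminf[OF fi AE_I2[OF sum1] sum2])
  have SS: "summable (\<lambda>m. integral\<^sup>L lborel (f m))"
    by (rule summable_integral[OF fi AE_I2[OF sum1] sum2])
  show "integrable lborel (\<lambda>t. Gamma (Complex c t) * (\<Sum>m. a m / of_nat (Suc m) powr (Complex c t)) * exp (Complex c t * complex_of_real b))"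
    unfolding pw by (rule Si)
  have sg: "summable g" using SS unfolding fI by (simp add: summable_cmult_iff)
  show "(\<integral>t. Gamma (Complex c t) * (\<Sum>m. a m / of_nat (Suc m) powr (Complex c t)) * exp (Complex c t * complex_of_real b) \<partial>lborel)
          = complex_of_real (2*pi) * (\<Sum>m. a m * complex_of_real (exp (- (real (Suc m) * exp (-b)))))"
    unfolding pw SI fI suminf_mult[OF sg] by (simp add: g_def[abs_def])
qed


lemma Mgen:
  fixes a :: "nat \<Rightarrow> complex" and B c Q :: real and N :: nat and k :: int
  assumes c: "c > 1" and aB: "\<And>m. norm (a m) \<le> B" and N: "N \<ge> 1" and Q: "Q > 0"
    and ck: "real N * c - real_of_int k > 1"
  shows "integrable lborel (\<lambda>t. Gamma (Complex c t) * (\<Sum>m. a m / of_nat (Suc m) powr (Complex c t)) *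
            riemann_zeta (of_nat N * Complex c t - of_int k) * complex_of_real Q powr (Complex c t))"
    and "(\<integral>t. Gamma (Complex c t) * (\<Sum>m. a m / of_nat (Suc m) powr (Complex c t)) *
            riemann_zeta (of_nat N * Complex c t - of_int k) * complex_of_real Q powr (Complex c t) \<partial>lborel)
         = complex_of_real (2*pi) * (\<Sum>n. complex_of_real (real (Suc n) powr real_of_int k) *
              (\<Sum>m. a m * complex_of_real (exp (- (real (Suc m) * (real (Suc n) ^ N / Q))))))"
proof -
  define D where "D = (\<lambda>t. Gamma (Complex c t) * (\<Sum>m. a m / of_nat (Suc m) powr (Complex c t)))"
  define b where "b n = ln Q - real N * ln (real (Suc n))" for n
  define g where "g n t = complex_of_real (real (Suc n) powr real_of_int k) * (D t * exp (Complex c t * complex_of_real (b n)))" for n t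
  define h where "h n = (\<Sum>m. a m * complex_of_real (exp (- (real (Suc m) * (real (Suc n) ^ N / Q)))))" for n
  have eb: "exp (- b n) = real (Suc n) ^ N / Q" for n
    unfolding b_def using Q by (simp add: exp_diff exp_minus exp_of_nat_mult field_simps del: of_nat_Suc)
  have Di: "integrable lborel D"
    using Lgen(1)[where a=a and B=B and b=0, OF c aB] by (simp add: D_def)
  have gi: "integrable lborel (g n)" for n
    unfolding g_def D_def using Lgen(1)[where a=a and B=B and b="b n", OF c aB] by (intro integrable_mult_right) (simp add: mult_ac)
  have gI: "integral\<^sup>L lborel (g n) = complex_of_real (2*pi) * (complex_of_real (real (Suc n) powr real_of_int k) * h n)" for n
  proof -
    have "integral\<^sup>L lborel (g n) = complex_of_real (real (Suc n) powr real_of_int k) * (\<integral>t. D t * exp (Complex c t * complex_of_real (b n)) \<partial>lborel)"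
      unfolding g_def by (rule integral_mult_right_zero)
    also have "(\<integral>t. D t * exp (Complex c t * complex_of_real (b n)) \<partial>lborel) = complex_of_real (2*pi) * h n"
      unfolding D_def h_def using Lgen(2)[where a=a and B=B and b="b n", OF c aB] by (simp add: eb del: of_nat_Suc)
    finally show ?thesis by (simp add: mult_ac)
  qed
  define p where "p = real N * c - real_of_int k"
  have ebc: "exp (c * b n) = Q powr c * real (Suc n) powr (- (real N * c))" for n
    unfolding b_def using Q by (simp add: powr_def exp_diff exp_minus right_diff_distrib field_simps del: of_nat_Suc)
  have ng: "norm (g n t) = Q powr c * norm (D t) * real (Suc n) powr (- p)" for n t
  proof -
    have "norm (g n t) = real (Suc n) powr real_of_int k * norm (D t) * exp (c * b n)"
      unfolding g_def by (simp add: norm_mult del: of_nat_Suc)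
    also have "\<dots> = Q powr c * norm (D t) * (real (Suc n) powr real_of_int k * real (Suc n) powr (- (real N * c)))"
      unfolding ebc by (simp add: mult_ac)
    also have "real (Suc n) powr real_of_int k * real (Suc n) powr (- (real N * c)) = real (Suc n) powr (- p)"
      unfolding p_def by (simp add: powr_add[symmetric] del: of_nat_Suc)
    finally show ?thesis .
  qed
  have sp: "summable (\<lambda>n. real (Suc n) powr (- p))" using ck unfolding p_def by (intro summable_Suc_powr)
  have sum1: "summable (\<lambda>n. norm (g n t))" for t
    unfolding ng using summable_mult[OF sp, of "Q powr c * norm (D t)"] by simp
  have sum2: "summable (\<lambda>n. \<integral>t. norm (g n t) \<partial>lborel)"
  proof -
    have "(\<lambda>n. \<integral>t. norm (g n t) \<partial>lborel) = (\<lambda>n. (Q powr c * (\<integral>t. norm (D t) \<partial>lborel)) * real (Suc n) powr (- p))"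
      unfolding ng by (simp add: mult_ac)
    thus ?thesis using summable_mult[OF sp] by simp
  qed
  have pw: "Gamma (Complex c t) * (\<Sum>m. a m / of_nat (Suc m) powr (Complex c t)) *
            riemann_zeta (of_nat N * Complex c t - of_int k) * complex_of_real Q powr (Complex c t) = (\<Sum>n. g n t)" for t
  proof -
    define w where "w = of_nat N * Complex c t - of_int k"
    have Rew: "Re w = p" unfolding w_def p_def by simp
    have sZ: "summable (\<lambda>n. 1 / of_nat (Suc n) powr w)"
    proof (rule summable_norm_cancel, rule summable_cong[THEN iffD1, OF _ sp])
      show "\<forall>\<^sub>F n in sequentially. real (Suc n) powr (- p) = norm (1 / of_nat (Suc n) powr w)"
        by (intro always_eventually allI) (simp add: norm_divide powr_Suc_complex Rew powr_def exp_minus inverse_eq_divide del: of_nat_Suc)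
    qed
    define K where "K = D t * complex_of_real Q powr (Complex c t)"
    have "Gamma (Complex c t) * (\<Sum>m. a m / of_nat (Suc m) powr (Complex c t)) *
            riemann_zeta (of_nat N * Complex c t - of_int k) * complex_of_real Q powr (Complex c t)
         = (\<Sum>n. 1 / of_nat (Suc n) powr w) * K"
      unfolding K_def D_def riemann_zeta_def w_def by (simp add: mult_ac)
    also have "\<dots> = (\<Sum>n. 1 / of_nat (Suc n) powr w * K)" by (rule suminf_mult2[OF sZ])
    also have "\<dots> = (\<Sum>n. g n t)"
    proof (rule suminf_cong)
      fix n
      define l where "l = ln (real (Suc n))"
      have Qs: "complex_of_real Q powr (Complex c t) = exp (Complex c t * complex_of_real (ln Q))"
        using Q by (simp add: powr_def Ln_of_real)
      have kk: "complex_of_real (real (Suc n) powr real_of_int k) = exp (complex_of_real (real_of_int k * l))"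
        unfolding l_def by (simp add: powr_def del: of_nat_Suc, subst exp_of_real[symmetric], simp)
      have "1 / of_nat (Suc n) powr w * K = exp (- (w * complex_of_real l) + Complex c t * complex_of_real (ln Q)) * D t"
        unfolding K_def Qs powr_Suc_complex l_def by (simp only: exp_add exp_minus) (simp add: divide_inverse mult_ac del: of_nat_Suc)
      also have "- (w * complex_of_real l) + Complex c t * complex_of_real (ln Q) = complex_of_real (real_of_int k * l) + Complex c t * complex_of_real (b n)"
        unfolding w_def b_def l_def by (simp add: algebra_simps)
      also have "exp (complex_of_real (real_of_int k * l) + Complex c t * complex_of_real (b n)) * D t = g n t"
        unfolding g_def kk by (simp add: exp_add mult_ac)
      finally show "1 / of_nat (Suc n) powr w * K = g n t" .
    qed
    finally show ?thesis .
  qed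
  have Si: "integrable lborel (\<lambda>t. \<Sum>n. g n t)"
    by (rule integrable_suminf[OF gi AE_I2[OF sum1] sum2])
  have SI: "(\<integral>t. (\<Sum>n. g n t) \<partial>lborel) = (\<Sum>n. integral\<^sup>L lborel (g n))"
    by (rule integral_suminf[OF gi AE_I2[OF sum1] sum2])
  have SS: "summable (\<lambda>n. integral\<^sup>L lborel (g n))"
    by (rule summable_integral[OF gi AE_I2[OF sum1] sum2])
  show "integrable lborel (\<lambda>t. Gamma (Complex c t) * (\<Sum>m. a m / of_nat (Suc m) powr (Complex c t)) *
            riemann_zeta (of_nat N * Complex c t - of_int k) * complex_of_real Q powr (Complex c t))"
    unfolding pw by (rule Si)
  have sg: "summable (\<lambda>n. complex_of_real (real (Suc n) powr real_of_int k) * h n)"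
    using SS unfolding gI by (simp add: summable_cmult_iff)
  show "(\<integral>t. Gamma (Complex c t) * (\<Sum>m. a m / of_nat (Suc m) powr (Complex c t)) *
            riemann_zeta (of_nat N * Complex c t - of_int k) * complex_of_real Q powr (Complex c t) \<partial>lborel)
         = complex_of_real (2*pi) * (\<Sum>n. complex_of_real (real (Suc n) powr real_of_int k) *
              (\<Sum>m. a m * complex_of_real (exp (- (real (Suc m) * (real (Suc n) ^ N / Q))))))"
    unfolding pw SI gI suminf_mult[OF sg] by (simp add: h_def)
qed


lemma chi_periodic:
  assumes "dirichlet_character q chi"
  shows "chi n = chi (n mod q)"
proof -
  have per: "\<And>n. chi (n + q) = chi n" using assms by (simp add: dirichlet_character_def)
  have "chi (m + q * j) = chi m" for m j
  proof (induction j)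
    case (Suc j)
    have "m + q * Suc j = (m + q * j) + q" by simp
    thus ?case using per[of "m + q * j"] Suc.IH by (simp only:)
  qed simp
  from this[of "n mod q" "n div q"] show ?thesis by simp
qed

lemma chi_bounded:
  assumes "dirichlet_character q chi"
  obtains B where "\<And>n. norm (chi n) \<le> B"
proof -
  have q: "q \<ge> 1" using assms by (simp add: dirichlet_character_def)
  define B where "B = Max ((\<lambda>r. norm (chi r)) ` {..<q})"
  have "norm (chi n) \<le> B" for n
  proof -
    have "n mod q \<in> {..<q}" using q by simp
    hence "norm (chi (n mod q)) \<le> B" unfolding B_def by (intro Max_ge) auto
    thus ?thesis using chi_periodic[OF assms, of n] by simp
  qed
  thus ?thesis using that by blast
qed

lemma summable_Dser:
  fixes a :: "nat \<Rightarrow> complex"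
  assumes c: "c > 1" and aB: "\<And>m. norm (a m) \<le> B"
  shows "summable (\<lambda>m. a m / of_nat (Suc m) powr (Complex c t))"
proof (rule summable_comparison_test'[where g = "\<lambda>m. B * real (Suc m) powr (- c)"])
  show "summable (\<lambda>m. B * real (Suc m) powr (- c))" using summable_Suc_powr[OF c] by (rule summable_mult)
  fix m :: nat
  have "norm (a m / of_nat (Suc m) powr (Complex c t)) = norm (a m) * real (Suc m) powr (- c)"
    unfolding norm_divide norm_powr_Suc by (simp add: powr_minus divide_inverse del: of_nat_Suc)
  thus "norm (a m / of_nat (Suc m) powr (Complex c t)) \<le> B * real (Suc m) powr (- c)"
    using aB[of m] by (simp add: mult_right_mono)
qed

lemma ap_sum:
  fixes q r :: nat and u :: real and \<alpha> :: complex
  assumes q: "q \<ge> 1" and r: "r \<in> {1..q}" and u: "u > 0"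
  shows "(\<Sum>m. (if Suc m mod q = r mod q then \<alpha> else 0) * complex_of_real (exp (- (real (Suc m) * u))))
       = \<alpha> * complex_of_real (exp (- (real r * u)) / (1 - exp (- (real q * u))))"
proof -
  define f where "f m = (if Suc m mod q = r mod q then \<alpha> else 0) * complex_of_real (exp (- (real (Suc m) * u)))" for m
  define g where "g j = r - 1 + j * q" for j
  have sg: "strict_mono g" unfolding g_def using q by (intro strict_monoI) simp
  have out: "f m = 0" if "m \<notin> range g" for m
  proof (rule ccontr)
    assume "f m \<noteq> 0"
    hence e: "Suc m mod q = r mod q" by (auto simp: f_def split: if_splits)
    have ge: "r \<le> Suc m"
    proof (cases "r = q")
      case True thus ?thesis using e q by (metis Suc_le_eq mod_self dvd_imp_le mod_0_imp_dvd zero_less_Suc)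
    next
      case False
      hence "r mod q = r" using r by simp
      thus ?thesis using e by (metis mod_less_eq_dividend)
    qed
    hence "q dvd Suc m - r" using e by (simp add: mod_eq_dvd_iff_nat)
    then obtain j where "Suc m - r = q * j" by auto
    hence "m = g j" unfolding g_def using ge r by (simp add: mult.commute)
    thus False using that by auto
  qed
  define z where "z = complex_of_real (exp (- (real q * u)))"
  have nz: "norm z < 1" unfolding z_def using q u by simp
  have fg: "f (g j) = (\<alpha> * complex_of_real (exp (- (real r * u)))) * z ^ j" for j
  proof -
    have m: "Suc (g j) mod q = r mod q" unfolding g_def using r by (simp add: Suc_diff_le)
    have "real (Suc (g j)) = real r + real j * real q" unfolding g_def using r by (simp add: Suc_diff_le)
    hence "exp (- (real (Suc (g j)) * u)) = exp (- (real r * u)) * exp (- (real q * u)) ^ j"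
      by (simp add: algebra_simps exp_add exp_diff exp_minus exp_of_nat_mult[symmetric] field_simps)
    thus ?thesis unfolding f_def z_def using m by (simp add: mult_ac)
  qed
  have "(\<lambda>j. (\<alpha> * complex_of_real (exp (- (real r * u)))) * z ^ j) sums ((\<alpha> * complex_of_real (exp (- (real r * u)))) * (1 / (1 - z)))"
    by (rule sums_mult[OF geometric_sums[OF nz]])
  hence "(\<lambda>j. f (g j)) sums ((\<alpha> * complex_of_real (exp (- (real r * u)))) * (1 / (1 - z)))"
    by (simp add: fg)
  hence "f sums ((\<alpha> * complex_of_real (exp (- (real r * u)))) * (1 / (1 - z)))"
    using sums_mono_reindex[of g f, OF sg out] by blast
  hence "suminf f = (\<alpha> * complex_of_real (exp (- (real r * u)))) * (1 / (1 - z))" by (rule sums_unique[symmetric])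
  thus ?thesis unfolding f_def z_def by (simp add: divide_inverse)
qed


theorem lemma4p1:
  fixes x c0 :: real and N q :: nat and h :: int and chi :: "nat \<Rightarrow> complex"
  assumes "x > 0" and "N \<ge> 1" and "dirichlet_character q chi"
    and "c0 > max 1 ((real N - 2 * real_of_int h + 1) / real N)"
  shows "((\<lambda>t. 1 / (2 * pi * \<i>) *
            (Gamma (Complex c0 t) * dirichlet_L (Complex c0 t) chi *
             riemann_zeta (of_nat N * Complex c0 t - of_int (int N - 2 * h)) *
             (of_real (real q / x)) powr (Complex c0 t)) * \<i>)
         has_integral
           (\<Sum>r = 1..q. \<Sum>n. chi r * of_real (
              real (Suc n) powr (of_int (int N - 2 * h)) *
              exp (- (real r / real q) * real (Suc n) ^ N * x) /
              (1 - exp (- (real (Suc n) ^ N * x)))))) UNIV"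
proof -
  note x = assms(1) and N = assms(2) and dc = assms(3)
  have q: "q \<ge> 1" using dc by (simp add: dirichlet_character_def)
  obtain B where B: "\<And>n. norm (chi n) \<le> B" using chi_bounded[OF dc] by blast
  have B0: "B \<ge> 0" using B[of 0] norm_ge_zero order_trans by blast
  define k where "k = int N - 2 * h"
  have c1: "c0 > 1" using assms(4) by simp
  have ck: "real N * c0 - real_of_int k > 1"
  proof -
    have Npos: "real N > 0" using N by simp
    have "c0 > (real N - 2 * real_of_int h + 1) / real N" using assms(4) by simp
    hence "c0 * real N > real N - 2 * real_of_int h + 1" using Npos by (simp add: divide_less_eq)
    thus ?thesis unfolding k_def by (simp add: algebra_simps)
  qed
  define Q where "Q = real q / x"
  have Q: "Q > 0" unfolding Q_def using q x by simp
  define a where "a r m = (if Suc m mod q = r mod q then chi r else 0)" for r m :: nat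
  have aB: "norm (a r m) \<le> B" for r m unfolding a_def using B B0 by simp
  have chi_dec: "chi (Suc m) = (\<Sum>r=1..q. a r m)" for m
  proof -
    define r0 where "r0 = (if Suc m mod q = 0 then q else Suc m mod q)"
    have r0: "r0 \<in> {1..q}" unfolding r0_def using q by (auto simp: Suc_le_eq less_imp_le)
    have iff: "Suc m mod q = r mod q \<longleftrightarrow> r = r0" if "r \<in> {1..q}" for r
    proof (cases "r = q")
      case True
      have lt: "Suc m mod q < q" using q by simp
      have 1: "Suc m mod q = r mod q \<longleftrightarrow> Suc m mod q = 0" using True by simp
      have 2: "r = r0 \<longleftrightarrow> Suc m mod q = 0"
      proof (cases "Suc m mod q = 0")
        case False
        hence "r0 = Suc m mod q" unfolding r0_def by simp
        hence "r \<noteq> r0" using True lt by simp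
        thus ?thesis using False by simp
      qed (simp add: r0_def True)
      show ?thesis using 1 2 by simp
    next
      case False
      hence "r < q" using that by simp
      thus ?thesis unfolding r0_def using that q by auto
    qed
    have "(\<Sum>r=1..q. a r m) = (\<Sum>r\<in>{1..q}. if r = r0 then chi r else 0)"
      by (rule sum.cong) (auto simp: a_def iff)
    also have "\<dots> = chi r0" using r0 by simp
    also have "chi r0 = chi (Suc m)"
    proof -
      have "r0 mod q = Suc m mod q" unfolding r0_def using q by auto
      thus ?thesis using chi_periodic[OF dc, of r0] chi_periodic[OF dc, of "Suc m"] by simp
    qed
    finally show ?thesis by simp
  qed
  define P where "P t = Complex c0 t" for t
  define G where "G r t = Gamma (Complex c0 t) * (\<Sum>m. a r m / of_nat (Suc m) powr (Complex c0 t)) *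
            riemann_zeta (of_nat N * Complex c0 t - of_int k) * complex_of_real Q powr (Complex c0 t)" for r t
  have Lsplit: "dirichlet_L (Complex c0 t) chi = (\<Sum>r=1..q. \<Sum>m. a r m / of_nat (Suc m) powr (Complex c0 t))" for t
  proof -
    have "dirichlet_L (Complex c0 t) chi = (\<Sum>m. \<Sum>r=1..q. a r m / of_nat (Suc m) powr (Complex c0 t))"
      unfolding dirichlet_L_def chi_dec by (simp add: sum_divide_distrib)
    also have "\<dots> = (\<Sum>r=1..q. \<Sum>m. a r m / of_nat (Suc m) powr (Complex c0 t))"
      by (rule suminf_sum) (rule summable_Dser[OF c1 aB])
    finally show ?thesis .
  qed
  define f where "f t = 1 / (2 * pi * \<i>) *
            (Gamma (Complex c0 t) * dirichlet_L (Complex c0 t) chi *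
             riemann_zeta (of_nat N * Complex c0 t - of_int (int N - 2 * h)) *
             (of_real (real q / x)) powr (Complex c0 t)) * \<i>" for t
  have fG: "f t = complex_of_real (1 / (2 * pi)) * (\<Sum>r\<in>{1..q}. G r t)" for t
  proof -
    have "f t = complex_of_real (1 / (2 * pi)) * (Gamma (Complex c0 t) * dirichlet_L (Complex c0 t) chi *
             riemann_zeta (of_nat N * Complex c0 t - of_int k) * complex_of_real Q powr (Complex c0 t))"
      unfolding f_def k_def Q_def by (simp add: field_simps)
    also have "\<dots> = complex_of_real (1 / (2 * pi)) * (\<Sum>r\<in>{1..q}. G r t)"
      unfolding Lsplit G_def by (simp add: sum_distrib_left sum_distrib_right mult_ac)
    finally show ?thesis .
  qed
  have Gi: "integrable lborel (G r)" for r
    unfolding G_def by (rule Mgen(1)[OF c1 aB N Q ck])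
  have GI: "integral\<^sup>L lborel (G r) = complex_of_real (2*pi) * (\<Sum>n. complex_of_real (real (Suc n) powr real_of_int k) *
              (\<Sum>m. a r m * complex_of_real (exp (- (real (Suc m) * (real (Suc n) ^ N / Q))))))" for r
    unfolding G_def by (rule Mgen(2)[OF c1 aB N Q ck])
  have inner: "complex_of_real (real (Suc n) powr real_of_int k) *
              (\<Sum>m. a r m * complex_of_real (exp (- (real (Suc m) * (real (Suc n) ^ N / Q)))))
       = chi r * of_real (real (Suc n) powr (of_int (int N - 2 * h)) *
              exp (- (real r / real q) * real (Suc n) ^ N * x) /
              (1 - exp (- (real (Suc n) ^ N * x))))" if r: "r \<in> {1..q}" for r n
  proof -
    define u where "u = real (Suc n) ^ N / Q"
    have u: "u > 0" unfolding u_def using Q by simp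
    have "(\<Sum>m. a r m * complex_of_real (exp (- (real (Suc m) * u)))) = chi r * complex_of_real (exp (- (real r * u)) / (1 - exp (- (real q * u))))"
      unfolding a_def by (rule ap_sum[OF q r u])
    moreover have "real r * u = real r / real q * real (Suc n) ^ N * x" unfolding u_def Q_def using x q by (simp add: field_simps)
    moreover have "real q * u = real (Suc n) ^ N * x" unfolding u_def Q_def using x q by (simp add: field_simps)
    ultimately show ?thesis unfolding u_def k_def by (simp add: mult_ac)
  qed
  have fi: "integrable lborel f" unfolding fG[abs_def] by (rule integrable_mult_right) (rule Bochner_Integration.integrable_sum, rule Gi)
  have "integral\<^sup>L lborel f = complex_of_real (1 / (2 * pi)) * (\<Sum>r\<in>{1..q}. integral\<^sup>L lborel (G r))"
    unfolding fG[abs_def] by (simp add: Bochner_Integration.integral_sum[OF Gi])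
  also have "\<dots> = (\<Sum>r = 1..q. \<Sum>n. chi r * of_real (
              real (Suc n) powr (of_int (int N - 2 * h)) *
              exp (- (real r / real q) * real (Suc n) ^ N * x) /
              (1 - exp (- (real (Suc n) ^ N * x)))))"
    unfolding GI sum_distrib_left
  proof (rule sum.cong[OF refl])
    fix r assume r: "r \<in> {1..q}"
    have e: "(\<lambda>n. complex_of_real (real (Suc n) powr real_of_int k) *
              (\<Sum>m. a r m * complex_of_real (exp (- (real (Suc m) * (real (Suc n) ^ N / Q))))))
       = (\<lambda>n. chi r * of_real (real (Suc n) powr (of_int (int N - 2 * h)) *
              exp (- (real r / real q) * real (Suc n) ^ N * x) /
              (1 - exp (- (real (Suc n) ^ N * x)))))"
      by (rule ext) (rule inner[OF r])
    show "complex_of_real (1 / (2 * pi)) * (complex_of_real (2 * pi) * (\<Sum>n. complex_of_real (real (Suc n) powr real_of_int k) *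
              (\<Sum>m. a r m * complex_of_real (exp (- (real (Suc m) * (real (Suc n) ^ N / Q)))))))
       = (\<Sum>n. chi r * of_real (real (Suc n) powr (of_int (int N - 2 * h)) *
              exp (- (real r / real q) * real (Suc n) ^ N * x) /
              (1 - exp (- (real (Suc n) ^ N * x)))))"
      unfolding e by simp
  qed
  finally have "integral\<^sup>L lborel f = (\<Sum>r = 1..q. \<Sum>n. chi r * of_real (
              real (Suc n) powr (of_int (int N - 2 * h)) *
              exp (- (real r / real q) * real (Suc n) ^ N * x) /
              (1 - exp (- (real (Suc n) ^ N * x)))))" .
  with has_integral_integral_lborel[OF fi] show ?thesis unfolding f_def by simp
qed

end
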